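(* Let $G$ be a finite simple graph with at least one edge, of order $n$. Then: (i) there exists a mitigating set $S$ of $G$ such that every connected component of the subgraph of $G$ induced by the edge set $S$ is isomorphic to $P_2$ or $P_3$ (the path on $2$ or $3$ vertices); (ii) $\mathrm{es}_{\Delta}(G)\leq n-\alpha(G)$, where $\alpha(G)$ is the independence number of $G$; moreover this bound is sharp, i.e. there exist graphs for which equality holds.
   Context: For a graph $G$ with maximum degree $\Delta(G)$, a set $S\subseteq E(G)$ is a mitigating set if $\Delta(G-S)\leq \Delta(G)-1$. The $\Delta$-edge stability number $\mathrm{es}_{\Delta}(G)$ is the minimum number of edges of $G$ whose removal results in a subgraph $H$ with $\Delta(H)=\Delta(G)-1$, i.e. the minimum size of a mitigating set. The subgraph induced by a set of edges $S$ consists of the edges of $S$ and their endpoints. *)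

theory Defs
  imports Main
begin

definition simple_graph :: "'a set \<Rightarrow> 'a set set \<Rightarrow> bool" where
  "simple_graph V E \<longleftrightarrow> finite V \<and> (\<forall>e\<in>E. e \<subseteq> V \<and> card e = 2)"

definition degree :: "'a set set \<Rightarrow> 'a \<Rightarrow> nat" where
  "degree E v = card {e\<in>E. v \<in> e}"

definition max_degree :: "'a set \<Rightarrow> 'a set set \<Rightarrow> nat" where
  "max_degree V E = Max (degree E ` V)"

definition mitigating :: "'a set \<Rightarrow> 'a set set \<Rightarrow> 'a set set \<Rightarrow> bool" where
  "mitigating V E S \<longleftrightarrow> S \<subseteq> E \<and> max_degree V (E - S) \<le> max_degree V E - 1"

definition es_Delta :: "'a set \<Rightarrow> 'a set set \<Rightarrow> nat" where
  "es_Delta V E = (LEAST k. \<exists>S. mitigating V E S \<and> card S = k)"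

definition independent :: "'a set set \<Rightarrow> 'a set \<Rightarrow> bool" where
  "independent E I \<longleftrightarrow> (\<forall>e\<in>E. \<not> e \<subseteq> I)"

definition independence_number :: "'a set \<Rightarrow> 'a set set \<Rightarrow> nat" where
  "independence_number V E = Max {card I | I. I \<subseteq> V \<and> independent E I}"

definition adjacent :: "'a set set \<Rightarrow> 'a \<Rightarrow> 'a \<Rightarrow> bool" where
  "adjacent E u v \<longleftrightarrow> {u, v} \<in> E"

definition components :: "'a set \<Rightarrow> 'a set set \<Rightarrow> 'a set set" where
  "components V E = {{v \<in> V. (adjacent E)\<^sup>*\<^sup>* u v} | u. u \<in> V}"

definition edge_induced_vertices :: "'a set set \<Rightarrow> 'a set" where
  "edge_induced_vertices S = \<Union>S"

definition graph_iso :: "'a set \<Rightarrow> 'a set set \<Rightarrow> 'b set \<Rightarrow> 'b set set \<Rightarrow> bool" where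
  "graph_iso V1 E1 V2 E2 \<longleftrightarrow> (\<exists>f. bij_betw f V1 V2 \<and>
      (\<forall>u\<in>V1. \<forall>v\<in>V1. {u, v} \<in> E1 \<longleftrightarrow> {f u, f v} \<in> E2))"

definition path_vertices :: "nat \<Rightarrow> nat set" where
  "path_vertices k = {0..<k}"

definition path_edges :: "nat \<Rightarrow> nat set set" where
  "path_edges k = {{i, Suc i} | i. Suc i < k}"

end

theory Submission
  imports Defs
begin

lemma hall:
  fixes R :: "'a \<Rightarrow> 'b set"
  assumes "finite A" "\<forall>a\<in>A. finite (R a)" "\<forall>X\<subseteq>A. card X \<le> card (\<Union>(R ` X))"
  shows "\<exists>f. inj_on f A \<and> (\<forall>a\<in>A. f a \<in> R a)"
  using assms
proof (induction "card A" arbitrary: A R rule: less_induct)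
  case less
  show ?case
  proof (cases "A = {}")
    case True then show ?thesis by auto
  next
    case False
    show ?thesis
    proof (cases "\<exists>X. X \<subseteq> A \<and> X \<noteq> {} \<and> X \<noteq> A \<and> card (\<Union>(R ` X)) = card X")
      case True
      then obtain X where X: "X \<subseteq> A" "X \<noteq> {}" "X \<noteq> A" "card (\<Union>(R ` X)) = card X" by blast
      have finX: "finite X" using X(1) less.prems(1) finite_subset by blast
      have "card X < card A" using X less.prems(1) by (meson psubsetI psubset_card_mono)
      then obtain f1 where f1: "inj_on f1 X" "\<forall>a\<in>X. f1 a \<in> R a"
        using less.hyps[of X R] less.prems X finX by auto
      define R2 where "R2 = (\<lambda>a. R a - \<Union>(R ` X))"
      have lt2: "card (A - X) < card A" using X less.prems(1)
      proof -
        have "card (A - X) = card A - card X" using X(1) finX by (simp add: card_Diff_subset)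
        moreover have "card X > 0" using X(2) finX by (simp add: card_gt_0_iff)
        moreover have "card A > 0" using \<open>card X < card A\<close> by simp
        ultimately show ?thesis by linarith
      qed
      have hall2: "\<forall>Y\<subseteq>A-X. card Y \<le> card (\<Union>(R2 ` Y))"
      proof (intro allI impI)
        fix Y assume Y: "Y \<subseteq> A - X"
        have finY: "finite Y" using Y less.prems(1) finite_subset by blast
        have eq: "\<Union>(R2 ` Y) = \<Union>(R ` (X \<union> Y)) - \<Union>(R ` X)" by (auto simp: R2_def)
        have fin: "finite (\<Union>(R ` (X \<union> Y)))" using less.prems(2) X Y finX finY by auto
        have sub: "\<Union>(R ` X) \<subseteq> \<Union>(R ` (X \<union> Y))" by auto
        have "card (X \<union> Y) \<le> card (\<Union>(R ` (X \<union> Y)))" proof -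
          have "X \<union> Y \<subseteq> A" using X Y by auto
          then show ?thesis using less.prems(3) by blast
        qed
        moreover have "card (X \<union> Y) = card X + card Y" using finX finY Y
          by (subst card_Un_disjoint) auto
        moreover have "card (\<Union>(R ` (X \<union> Y)) - \<Union>(R ` X)) = card (\<Union>(R ` (X \<union> Y))) - card (\<Union>(R ` X))"
          using fin sub by (simp add: card_Diff_subset finite_subset)
        ultimately show "card Y \<le> card (\<Union>(R2 ` Y))" unfolding eq using X(4) by linarith
      qed
      obtain f2 where f2: "inj_on f2 (A-X)" "\<forall>a\<in>A-X. f2 a \<in> R2 a"
        using less.hyps[OF lt2, of R2] less.prems hall2 by (auto simp: R2_def)
      define f where "f = (\<lambda>a. if a \<in> X then f1 a else f2 a)"
      have "inj_on f A"
      proof (rule inj_onI)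
        fix x y assume xy: "x \<in> A" "y \<in> A" "f x = f y"
        show "x = y"
        proof (cases "x \<in> X"; cases "y \<in> X")
          assume "x \<in> X" "y \<in> X" then show ?thesis using xy f1 by (auto simp: f_def inj_on_def)
        next
          assume "x \<notin> X" "y \<notin> X" then show ?thesis using xy f2 by (auto simp: f_def inj_on_def)
        next
          assume "x \<in> X" "y \<notin> X" then show ?thesis using xy f1 f2 by (auto simp: f_def R2_def)
        next
          assume "x \<notin> X" "y \<in> X" then show ?thesis using xy f1 f2 by (auto simp: f_def R2_def) (metis DiffI)
        qed
      qed
      moreover have "\<forall>a\<in>A. f a \<in> R a" using f1 f2 by (auto simp: f_def R2_def)
      ultimately show ?thesis by blast
    next
      case False
      then have strict: "\<forall>X. X \<subseteq> A \<and> X \<noteq> {} \<and> X \<noteq> A \<longrightarrow> card X < card (\<Union>(R ` X))"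
        using less.prems(3) le_neq_implies_less by metis
      obtain a where a: "a \<in> A" using \<open>A \<noteq> {}\<close> by blast
      have "1 \<le> card (R a)" using less.prems(3)[rule_format, of "{a}"] a by auto
      then obtain b where b: "b \<in> R a" by (metis card.empty ex_in_conv not_one_le_zero)
      define R' where "R' = (\<lambda>x. R x - {b})"
      have lt: "card (A - {a}) < card A" using a less.prems(1) by (metis card_Diff1_less)
      have hall': "\<forall>Y\<subseteq>A-{a}. card Y \<le> card (\<Union>(R' ` Y))"
      proof (intro allI impI)
        fix Y assume Y: "Y \<subseteq> A - {a}"
        show "card Y \<le> card (\<Union>(R' ` Y))"
        proof (cases "Y = {}")
          case True then show ?thesis by simp
        next
          case False
          have "card Y < card (\<Union>(R ` Y))" using strict Y False a by blast
          moreover have "\<Union>(R' ` Y) = \<Union>(R ` Y) - {b}" by (auto simp: R'_def)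
          moreover have "card (\<Union>(R ` Y)) - 1 \<le> card (\<Union>(R ` Y) - {b})"
            using diff_card_le_card_Diff[of "{b}" "\<Union>(R ` Y)"] by simp
          ultimately show ?thesis by simp
        qed
      qed
      obtain f' where f': "inj_on f' (A-{a})" "\<forall>x\<in>A-{a}. f' x \<in> R' x"
        using less.hyps[OF lt, of R'] less.prems hall' by (auto simp: R'_def)
      define f where "f = f'(a := b)"
      have "inj_on f A"
      proof (rule inj_onI)
        fix x y assume xy: "x \<in> A" "y \<in> A" "f x = f y"
        then show "x = y" using f' by (auto simp: f_def R'_def inj_on_def split: if_splits)
      qed
      moreover have "\<forall>x\<in>A. f x \<in> R x" using f' b by (auto simp: f_def R'_def)
      ultimately show ?thesis by blast
    qed
  qed
qed


lemma pe2: "path_edges 2 = {{0,1}}"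
  by (auto simp: path_edges_def)
lemma pe3: "path_edges 3 = {{0,1},{1,2}}"
  by (auto simp: path_edges_def less_Suc_eq)

lemma sub2: "A \<subseteq> {p,q} \<Longrightarrow> A \<noteq> {} \<Longrightarrow> (\<exists>a. A = {a}) \<or> (\<exists>a b. a \<noteq> b \<and> A = {a,b})"
proof (cases "p \<in> A"; cases "q \<in> A")
  assume "A \<subseteq> {p,q}" "p \<in> A" "q \<in> A" then show ?thesis by (cases "p = q") auto
qed auto

lemma star_comp:
  assumes two: "\<forall>e\<in>S. card e = 2"
   and priv: "\<forall>a b. {a,b}\<in>S \<longrightarrow> {y. {a,y}\<in>S} = {b} \<or> {y. {b,y}\<in>S} = {a}"
   and deg: "\<forall>x. \<exists>p q. {y. {x,y}\<in>S} \<subseteq> {p,q}"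
   and C: "C \<in> components (edge_induced_vertices S) S"
  shows "graph_iso C {e\<in>S. e\<subseteq>C} (path_vertices 2) (path_edges 2) \<or>
         graph_iso C {e\<in>S. e\<subseteq>C} (path_vertices 3) (path_edges 3)"
proof -
  define NS where "NS x = {y. {x,y}\<in>S}" for x
  have sym: "y \<in> NS x \<longleftrightarrow> x \<in> NS y" for x y by (simp add: NS_def insert_commute)
  have irr: "x \<notin> NS x" for x using two by (auto simp: NS_def)
  have priv': "y \<in> NS x \<Longrightarrow> NS x = {y} \<or> NS y = {x}" for x y using priv by (simp add: NS_def)
  have adj: "adjacent S a b \<longleftrightarrow> b \<in> NS a" for a b by (simp add: adjacent_def NS_def)
  have inU: "x \<in> \<Union>S \<longleftrightarrow> NS x \<noteq> {}" for x
  proof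
    assume "x \<in> \<Union>S"
    then obtain e where e: "e \<in> S" "x \<in> e" by blast
    have "card e = 2" using e two by auto
    then obtain p q where "e = {p,q}" "p \<noteq> q" by (auto simp: card_2_iff)
    then show "NS x \<noteq> {}" using e by (auto simp: NS_def insert_commute)
  next
    assume "NS x \<noteq> {}" then show "x \<in> \<Union>S" by (auto simp: NS_def)
  qed
  from C obtain u where u: "u \<in> \<Union>S" and Ceq: "C = {v \<in> \<Union>S. (adjacent S)\<^sup>*\<^sup>* u v}"
    by (auto simp: components_def edge_induced_vertices_def)
  obtain w where w: "w \<in> NS u" using u inU by blast
  obtain c where c1: "u = c \<or> u \<in> NS c" and c2: "NS c \<noteq> {}" and c3: "\<forall>y\<in>NS c. NS y = {c}"
  proof (cases "\<forall>y\<in>NS u. NS y = {u}")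
    case True then show ?thesis using that w by blast
  next
    case False
    then obtain z where z: "z \<in> NS u" "NS z \<noteq> {u}" by blast
    then have Nu: "NS u = {z}" using priv' by blast
    have uz: "u \<in> NS z" using z sym by blast
    have "\<forall>y\<in>NS z. NS y = {z}"
    proof
      fix y assume y: "y \<in> NS z"
      show "NS y = {z}"
      proof (cases "y = u")
        case True then show ?thesis using Nu by simp
      next
        case False
        then show ?thesis using priv'[OF y] uz by auto
      qed
    qed
    then show ?thesis using that[of z] uz by blast
  qed
  define K where "K = insert c (NS c)"
  have clos: "(adjacent S)\<^sup>*\<^sup>* u v \<Longrightarrow> v \<in> K" for v
  proof (induction rule: rtranclp_induct)
    case base then show ?case using c1 by (auto simp: K_def)
  next
    case (step y z)
    then show ?case using c3 by (auto simp: K_def adj)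
  qed
  have reach: "v \<in> K \<Longrightarrow> (adjacent S)\<^sup>*\<^sup>* u v" for v
  proof -
    assume v: "v \<in> K"
    have rc: "(adjacent S)\<^sup>*\<^sup>* u c"
      using c1 sym by (metis adj r_into_rtranclp rtranclp.rtrancl_refl)
    show ?thesis
    proof (cases "v = c")
      case True then show ?thesis using rc by simp
    next
      case False
      then have "adjacent S c v" using v by (auto simp: K_def adj)
      then show ?thesis using rc by (meson rtranclp.rtrancl_into_rtrancl)
    qed
  qed
  have KU: "K \<subseteq> \<Union>S" using c2 c3 inU by (auto simp: K_def)
  have CK: "C = K" using Ceq clos reach KU by blast
  have edges: "{e\<in>S. e\<subseteq>C} = (\<lambda>y. {c,y}) ` NS c"
  proof
    show "{e\<in>S. e\<subseteq>C} \<subseteq> (\<lambda>y. {c,y}) ` NS c"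
    proof
      fix e assume e: "e \<in> {e\<in>S. e\<subseteq>C}"
      have "card e = 2" using e two by auto
      then obtain p q where pq: "e = {p,q}" "p \<noteq> q" by (auto simp: card_2_iff)
      have "p \<in> K" "q \<in> K" using e pq CK by auto
      moreover have "q \<in> NS p" using e pq by (auto simp: NS_def)
      ultimately have "p = c \<or> q = c" using c3 irr by (auto simp: K_def)
      then show "e \<in> (\<lambda>y. {c,y}) ` NS c"
        using pq \<open>q \<in> NS p\<close> sym by (auto simp: insert_commute)
    qed
  next
    show "(\<lambda>y. {c,y}) ` NS c \<subseteq> {e\<in>S. e\<subseteq>C}"
      using CK by (auto simp: K_def NS_def)
  qed
  obtain p q where pq: "NS c \<subseteq> {p,q}" using deg unfolding NS_def by meson
  have cases: "(\<exists>a. NS c = {a}) \<or> (\<exists>a b. a \<noteq> b \<and> NS c = {a,b})"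
    using sub2[OF pq c2] .
  show ?thesis
  proof (cases "\<exists>a. NS c = {a}")
    case True
    then obtain a where a: "NS c = {a}" by blast
    have ca: "c \<noteq> a" using a irr by auto
    define g where "g x = (if x = c then 0 else (1::nat))" for x
    have "graph_iso C {e\<in>S. e\<subseteq>C} (path_vertices 2) (path_edges 2)"
      unfolding graph_iso_def
    proof (intro exI[of _ g] conjI)
      show "bij_betw g C (path_vertices 2)"
        using ca unfolding CK K_def a path_vertices_def bij_betw_def inj_on_def g_def
        by (auto simp: image_def)
      show "\<forall>u\<in>C. \<forall>v\<in>C. ({u, v} \<in> {e \<in> S. e \<subseteq> C}) = ({g u, g v} \<in> path_edges 2)"
        unfolding edges a pe2 unfolding CK K_def a using ca by (auto simp: g_def doubleton_eq_iff)
    qed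
    then show ?thesis by blast
  next
    case False
    then obtain a b where ab: "a \<noteq> b" "NS c = {a,b}" using cases by blast
    have ca: "c \<noteq> a" "c \<noteq> b" using ab irr by auto
    define g where "g x = (if x = c then 1 else if x = a then 0 else (2::nat))" for x
    have "graph_iso C {e\<in>S. e\<subseteq>C} (path_vertices 3) (path_edges 3)"
      unfolding graph_iso_def
    proof (intro exI[of _ g] conjI)
      show "bij_betw g C (path_vertices 3)"
        using ca ab unfolding CK K_def ab path_vertices_def bij_betw_def inj_on_def g_def
        by (auto simp: image_def)
      show "\<forall>u\<in>C. \<forall>v\<in>C. ({u, v} \<in> {e \<in> S. e \<subseteq> C}) = ({g u, g v} \<in> path_edges 3)"
        unfolding edges ab pe3 unfolding CK K_def ab using ca ab by (auto simp: g_def doubleton_eq_iff)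
    qed
    then show ?thesis by blast
  qed
qed


lemma deg_nbr:
  assumes "\<forall>e\<in>E. card e = 2"
  shows "degree E v = card {x. {v,x}\<in>E}"
proof -
  have "bij_betw (\<lambda>x. {v,x}) {x. {v,x}\<in>E} {e\<in>E. v\<in>e}"
    unfolding bij_betw_def
  proof
    show "inj_on (\<lambda>x. {v,x}) {x. {v,x}\<in>E}" by (auto simp: inj_on_def doubleton_eq_iff)
    show "(\<lambda>x. {v,x}) ` {x. {v,x}\<in>E} = {e\<in>E. v\<in>e}"
    proof
      show "(\<lambda>x. {v,x}) ` {x. {v,x}\<in>E} \<subseteq> {e\<in>E. v\<in>e}" by auto
      show "{e\<in>E. v\<in>e} \<subseteq> (\<lambda>x. {v,x}) ` {x. {v,x}\<in>E}"
      proof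
        fix e assume e: "e \<in> {e\<in>E. v\<in>e}"
        then have "card e = 2" using assms by auto
        then obtain p q where pq: "e = {p,q}" by (auto simp: card_2_iff)
        show "e \<in> (\<lambda>x. {v,x}) ` {x. {v,x}\<in>E}"
        proof (cases "v = p")
          case True then show ?thesis using e pq by auto
        next
          case False then have "v = q" using e pq by auto
          then show ?thesis using e pq by (auto simp: image_def insert_commute)
        qed
      qed
    qed
  qed
  then show ?thesis unfolding degree_def by (simp add: bij_betw_same_card)
qed


lemma example: "\<exists>(V' :: nat set) E'. simple_graph V' E' \<and> E' \<noteq> {} \<and>
            es_Delta V' E' = card V' - independence_number V' E'"
proof (intro exI conjI)
  let ?V = "{0::nat,1}" and ?E = "{{0::nat,1}}"
  show sg: "simple_graph ?V ?E" by (simp add: simple_graph_def)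
  show "?E \<noteq> {}" by simp
  have d0: "{e \<in> ?E. (0::nat) \<in> e} = ?E" by auto
  have d1: "{e \<in> ?E. (1::nat) \<in> e} = ?E" by auto
  have md: "max_degree ?V ?E = 1" by (simp only: max_degree_def degree_def image_insert image_empty d0 d1) simp
  have md0: "max_degree ?V ({}::nat set set) = 0" by (simp add: max_degree_def degree_def)
  have mit1: "mitigating ?V ?E ?E" unfolding mitigating_def Diff_cancel md md0 by simp
  have notm0: "\<not> mitigating ?V ?E {}" unfolding mitigating_def Diff_empty md by simp
  have es: "es_Delta ?V ?E = 1"
    unfolding es_Delta_def
  proof (rule Least_equality)
    show "\<exists>S. mitigating ?V ?E S \<and> card S = 1" using mit1 by (intro exI[of _ ?E]) simp
    show "\<And>y. \<exists>S. mitigating ?V ?E S \<and> card S = y \<Longrightarrow> 1 \<le> y"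
    proof -
      fix y assume "\<exists>S. mitigating ?V ?E S \<and> card S = y"
      then obtain S where S: "mitigating ?V ?E S" "card S = y" by blast
      have "S \<subseteq> ?E" using S by (simp add: mitigating_def)
      then have "S = {} \<or> S = ?E" by blast
      then show "1 \<le> y" using S notm0 by auto
    qed
  qed
  have ind: "independence_number ?V ?E = 1"
    unfolding independence_number_def
  proof (rule Max_eqI)
    have "{card I |I. I \<subseteq> ?V \<and> independent ?E I} \<subseteq> card ` Pow ?V" by auto
    then show "finite {card I |I. I \<subseteq> ?V \<and> independent ?E I}" by (meson finite_Pow_iff finite_imageI finite_subset finite.intros)
    show "\<And>y. y \<in> {card I |I. I \<subseteq> ?V \<and> independent ?E I} \<Longrightarrow> y \<le> 1"
    proof -
      fix y assume "y \<in> {card I |I. I \<subseteq> ?V \<and> independent ?E I}"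
      then obtain I where I: "I \<subseteq> ?V" "independent ?E I" "y = card I" by blast
      have "I \<noteq> ?V" using I(2) by (auto simp: independent_def)
      then have "I \<subset> ?V" using I(1) by blast
      then have "card I < card ?V" by (meson finite.intros psubset_card_mono)
      then show "y \<le> 1" using I(3) by simp
    qed
    show "1 \<in> {card I |I. I \<subseteq> ?V \<and> independent ?E I}"
      by (rule CollectI, rule exI[of _ "{0}"]) (simp add: independent_def)
  qed
  show "es_Delta ?V ?E = card ?V - independence_number ?V ?E" using es ind by simp
qed

lemma mitig_suff:
  assumes sg: "simple_graph V E" and S: "S \<subseteq> E"
    and cov: "\<forall>v\<in>V. degree E v = max_degree V E \<longrightarrow> (\<exists>e\<in>S. v \<in> e)"
    and Vne: "V \<noteq> {}"
  shows "mitigating V E S"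
proof -
  have finV: "finite V" using sg by (simp add: simple_graph_def)
  have finE: "finite E"
  proof -
    have "E \<subseteq> Pow V" using sg by (auto simp: simple_graph_def)
    then show ?thesis using finV by (meson finite_Pow_iff finite_subset)
  qed
  have le: "degree E v \<le> max_degree V E" if "v \<in> V" for v
    unfolding max_degree_def using finV that by simp
  have "degree (E - S) v \<le> max_degree V E - 1" if v: "v \<in> V" for v
  proof -
    have sub: "{e\<in>E-S. v\<in>e} \<subseteq> {e\<in>E. v\<in>e}" by auto
    have fin: "finite {e\<in>E. v\<in>e}" using finE by simp
    show ?thesis
    proof (cases "degree E v = max_degree V E")
      case True
      then obtain e where e: "e \<in> S" "v \<in> e" using cov v by blast
      then have "e \<in> {e\<in>E. v\<in>e}" "e \<notin> {e\<in>E-S. v\<in>e}" using S by auto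
      then have "{e\<in>E-S. v\<in>e} \<subset> {e\<in>E. v\<in>e}" using sub by blast
      then have "degree (E - S) v < degree E v" unfolding degree_def
        using fin by (simp add: psubset_card_mono)
      then show ?thesis using True by simp
    next
      case False
      have "degree (E - S) v \<le> degree E v" unfolding degree_def using fin sub by (simp add: card_mono)
      then show ?thesis using False le[OF v] by simp
    qed
  qed
  then have "max_degree V (E - S) \<le> max_degree V E - 1"
    unfolding max_degree_def[of V "E - S"] using finV Vne by simp
  then show ?thesis using S by (simp add: mitigating_def)
qed

theorem theorem2p1:
  fixes V :: "'a set" and E :: "'a set set"
  assumes "simple_graph V E" and "E \<noteq> {}"
  shows "(\<exists>S. mitigating V E S \<and>
            (\<forall>C \<in> components (edge_induced_vertices S) S.
               graph_iso C {e \<in> S. e \<subseteq> C} (path_vertices 2) (path_edges 2) \<or>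
               graph_iso C {e \<in> S. e \<subseteq> C} (path_vertices 3) (path_edges 3)))
       \<and> es_Delta V E \<le> card V - independence_number V E
       \<and> (\<exists>(V' :: nat set) E'. simple_graph V' E' \<and> E' \<noteq> {} \<and>
            es_Delta V' E' = card V' - independence_number V' E')"
proof -
  note sg = assms(1)
  have finV: "finite V" using sg by (simp add: simple_graph_def)
  have two: "\<forall>e\<in>E. card e = 2" and EV: "\<forall>e\<in>E. e \<subseteq> V" using sg by (auto simp: simple_graph_def)
  define D where "D = max_degree V E"
  define N where "N v = {x. {v,x}\<in>E}" for v
  have degN: "degree E v = card (N v)" for v unfolding N_def using deg_nbr[OF two] .
  have NV: "N v \<subseteq> V" for v using EV by (auto simp: N_def)
  have finN: "finite (N v)" for v using NV finV finite_subset by blast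
  have Nsym: "x \<in> N v \<longleftrightarrow> v \<in> N x" for x v by (simp add: N_def insert_commute)
  obtain e0 where e0: "e0 \<in> E" using assms(2) by blast
  then obtain a0 b0 where ab0: "e0 = {a0,b0}" "a0 \<noteq> b0" using two by (meson card_2_iff)
  have a0V: "a0 \<in> V" using EV e0 ab0 by auto
  have Vne: "V \<noteq> {}" using a0V by blast
  have leD: "degree E v \<le> D" if "v \<in> V" for v
    unfolding D_def max_degree_def using finV that by simp
  have "b0 \<in> N a0" using e0 ab0 by (simp add: N_def)
  then have "1 \<le> card (N a0)" using finN[of a0] by (metis One_nat_def Suc_leI card_gt_0_iff empty_iff)
  then have D1: "1 \<le> D" using leD[OF a0V] degN by simp
  define M where "M = {v\<in>V. degree E v = D}"
  have finM: "finite M" using finV by (simp add: M_def)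
  have mit: "mitigating V E S" if "S \<subseteq> E" "\<forall>v\<in>M. \<exists>e\<in>S. v \<in> e" for S
    using mitig_suff[OF sg that(1) _ Vne] that(2) by (auto simp: M_def D_def)
  have hallc: "\<forall>X\<subseteq>M. card X \<le> card (\<Union>(N ` X))"
  proof (intro allI impI)
    fix X assume X: "X \<subseteq> M"
    define Y where "Y = \<Union>(N ` X)"
    have finX: "finite X" using X finM finite_subset by blast
    have YV: "Y \<subseteq> V" using NV by (auto simp: Y_def)
    have finY: "finite Y" using YV finV finite_subset by blast
    have "(\<Sum>v\<in>X. card (N v)) = (\<Sum>v\<in>X. D)"
      by (rule sum.cong) (use X degN in \<open>auto simp: M_def\<close>)
    then have "D * card X = (\<Sum>v\<in>X. card (N v))" by simp
    also have "\<dots> = (\<Sum>v\<in>X. \<Sum>y\<in>Y. if y \<in> N v then 1 else 0)"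
    proof (rule sum.cong[OF refl])
      fix v assume v: "v \<in> X"
      have "(\<Sum>y\<in>Y. if y \<in> N v then 1 else 0) = (\<Sum>y\<in>{y\<in>Y. y \<in> N v}. (1::nat))"
        using sum.inter_filter[OF finY, of "\<lambda>_. 1::nat" "\<lambda>y. y \<in> N v"] by simp
      also have "{y\<in>Y. y \<in> N v} = N v" using v by (auto simp: Y_def)
      finally show "card (N v) = (\<Sum>y\<in>Y. if y \<in> N v then 1 else 0)" by simp
    qed
    also have "\<dots> = (\<Sum>y\<in>Y. \<Sum>v\<in>X. if y \<in> N v then 1 else 0)" by (rule sum.swap)
    also have "\<dots> \<le> (\<Sum>y\<in>Y. D)"
    proof (rule sum_mono)
      fix y assume y: "y \<in> Y"
      have "(\<Sum>v\<in>X. if y \<in> N v then 1 else 0) = (\<Sum>v\<in>{v\<in>X. y \<in> N v}. (1::nat))"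
        using sum.inter_filter[OF finX, of "\<lambda>_. 1::nat" "\<lambda>v. y \<in> N v"] by simp
      also have "\<dots> = card {v\<in>X. y \<in> N v}" by simp
      also have "\<dots> \<le> card (N y)" using finN[of y] Nsym by (intro card_mono) auto
      also have "\<dots> \<le> D" using leD[of y] y YV degN by auto
      finally show "(\<Sum>v\<in>X. if y \<in> N v then 1 else 0) \<le> D" .
    qed
    also have "\<dots> = D * card Y" by simp
    finally have "D * card X \<le> D * card Y" .
    then show "card X \<le> card (\<Union>(N ` X))" using D1 Y_def by simp
  qed
  obtain f where finj: "inj_on f M" and fN: "\<forall>v\<in>M. f v \<in> N v"
    using hall[OF finM _ hallc] finN by auto
  have fE: "{v, f v} \<in> E" if "v \<in> M" for v using fN that by (simp add: N_def)
  define F where "F = (\<lambda>v. {v, f v}) ` M"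
  have finF: "finite F" using finM by (simp add: F_def)
  have FE: "F \<subseteq> E" using fE by (auto simp: F_def)
  define P where "P T \<longleftrightarrow> T \<subseteq> F \<and> (\<forall>v\<in>M. \<exists>e\<in>T. v \<in> e)" for T
  have PF: "P F" by (auto simp: P_def F_def)
  obtain S where PS: "P S" and Smin: "\<forall>T. P T \<longrightarrow> card S \<le> card T"
    using ex_has_least_nat[of P F card] PF by blast
  have SF: "S \<subseteq> F" using PS by (simp add: P_def)
  have finS: "finite S" using SF finF finite_subset by blast
  have SE: "S \<subseteq> E" using SF FE by blast
  have covS: "\<forall>v\<in>M. \<exists>e\<in>S. v \<in> e" using PS by (simp add: P_def)
  have part1: "\<forall>C \<in> components (edge_induced_vertices S) S.
               graph_iso C {e \<in> S. e \<subseteq> C} (path_vertices 2) (path_edges 2) \<or>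
               graph_iso C {e \<in> S. e \<subseteq> C} (path_vertices 3) (path_edges 3)"
  proof
    fix C assume C: "C \<in> components (edge_induced_vertices S) S"
    have twoS: "\<forall>e\<in>S. card e = 2" using SE two by blast
    have priv: "\<forall>a b. {a,b}\<in>S \<longrightarrow> {y. {a,y}\<in>S} = {b} \<or> {y. {b,y}\<in>S} = {a}"
    proof (intro allI impI)
      fix a b assume ab: "{a,b} \<in> S"
      have abne: "a \<noteq> b" using ab twoS by fastforce
      have "card (S - {{a,b}}) < card S" using ab finS by (meson card_Diff1_less)
      then have "\<not> P (S - {{a,b}})" using Smin by fastforce
      then obtain v where v: "v \<in> M" "\<forall>e\<in>S - {{a,b}}. v \<notin> e" using SF by (auto simp: P_def)
      obtain e where e: "e \<in> S" "v \<in> e" using covS v(1) by blast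
      then have "e = {a,b}" using v(2) by blast
      then have vab: "v = a \<or> v = b" using e by auto
      have only: "\<And>e'. e' \<in> S \<Longrightarrow> v \<in> e' \<Longrightarrow> e' = {a,b}" using v(2) by blast
      show "{y. {a,y}\<in>S} = {b} \<or> {y. {b,y}\<in>S} = {a}"
      proof (cases "v = a")
        case True
        have "{y. {a,y}\<in>S} = {b}"
        proof
          show "{y. {a,y}\<in>S} \<subseteq> {b}"
          proof
            fix y assume "y \<in> {y. {a,y}\<in>S}"
            then have "{a,y} = {a,b}" using only True by auto
            then show "y \<in> {b}" using abne by (auto simp: doubleton_eq_iff)
          qed
          show "{b} \<subseteq> {y. {a,y}\<in>S}" using ab by simp
        qed
        then show ?thesis by blast
      next
        case False
        then have vb: "v = b" using vab by blast
        have "{y. {b,y}\<in>S} = {a}"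
        proof
          show "{y. {b,y}\<in>S} \<subseteq> {a}"
          proof
            fix y assume "y \<in> {y. {b,y}\<in>S}"
            then have "{b,y} = {a,b}" using only vb by auto
            then show "y \<in> {a}" using abne by (auto simp: doubleton_eq_iff)
          qed
          show "{a} \<subseteq> {y. {b,y}\<in>S}" using ab by (simp add: insert_commute)
        qed
        then show ?thesis by blast
      qed
    qed
    have deg: "\<forall>x. \<exists>p q. {y. {x,y}\<in>S} \<subseteq> {p,q}"
    proof
      fix x
      obtain q where q: "\<forall>v\<in>M. f v = x \<longrightarrow> v = q"
        using finj by (metis inj_on_def)
      have "{y. {x,y}\<in>S} \<subseteq> {f x, q}"
      proof
        fix y assume "y \<in> {y. {x,y}\<in>S}"
        then have "{x,y} \<in> F" using SF by auto
        then obtain v where v: "v \<in> M" "{x,y} = {v, f v}" by (auto simp: F_def)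
        then show "y \<in> {f x, q}" using q by (auto simp: doubleton_eq_iff)
      qed
      then show "\<exists>p q. {y. {x,y}\<in>S} \<subseteq> {p,q}" by blast
    qed
    show "graph_iso C {e \<in> S. e \<subseteq> C} (path_vertices 2) (path_edges 2) \<or>
          graph_iso C {e \<in> S. e \<subseteq> C} (path_vertices 3) (path_edges 3)"
      using star_comp[OF twoS priv deg C] .
  qed
  have mS: "mitigating V E S" using mit[OF SE covS] .
  define IS where "IS = {card I | I. I \<subseteq> V \<and> independent E I}"
  have finIS: "finite IS"
  proof -
    have "IS \<subseteq> card ` Pow V" by (auto simp: IS_def)
    then show ?thesis using finV by (meson finite_Pow_iff finite_imageI finite_subset)
  qed
  have "0 \<in> IS" unfolding IS_def by (rule CollectI, rule exI[of _ "{}"]) (use two in \<open>fastforce simp: independent_def\<close>)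
  then have "independence_number V E \<in> IS" unfolding independence_number_def IS_def[symmetric]
    using finIS by (intro Max_in) auto
  then obtain I where I: "I \<subseteq> V" "independent E I" "card I = independence_number V E"
    by (auto simp: IS_def)
  have fI: "f v \<notin> I" if "v \<in> M \<inter> I" for v
    using I(2) fE[of v] that by (auto simp: independent_def)
  define S2 where "S2 = (\<lambda>v. {v, f v}) ` (M \<inter> I) \<union> (\<lambda>v. {v, f v}) ` (M - I - f ` (M \<inter> I))"
  have S2E: "S2 \<subseteq> E" using fE by (auto simp: S2_def)
  have cov2: "\<forall>v\<in>M. \<exists>e\<in>S2. v \<in> e"
  proof
    fix v assume v: "v \<in> M"
    show "\<exists>e\<in>S2. v \<in> e"
    proof (cases "v \<in> I \<or> v \<notin> f ` (M \<inter> I)")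
      case True then show ?thesis using v by (auto simp: S2_def)
    next
      case False
      then obtain u where "u \<in> M \<inter> I" "v = f u" by blast
      then show ?thesis by (auto simp: S2_def)
    qed
  qed
  have "card S2 \<le> card (M \<inter> I) + card (M - I - f ` (M \<inter> I))"
    unfolding S2_def by (rule order_trans[OF card_Un_le]) (intro add_mono card_image_le; simp add: finM)
  also have "card (M \<inter> I) = card (f ` (M \<inter> I))"
    using finj by (metis card_image inj_on_subset inf_le1)
  also have "card (f ` (M \<inter> I)) + card (M - I - f ` (M \<inter> I)) = card (f ` (M \<inter> I) \<union> (M - I - f ` (M \<inter> I)))"
    using finM by (subst card_Un_disjoint) auto
  also have "\<dots> \<le> card (V - I)"
  proof (rule card_mono)
    show "finite (V - I)" using finV by simp
    show "f ` (M \<inter> I) \<union> (M - I - f ` (M \<inter> I)) \<subseteq> V - I"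
      using fI fN NV by (auto simp: M_def)
  qed
  also have "\<dots> = card V - independence_number V E"
    using I finV by (simp add: card_Diff_subset finite_subset)
  finally have S2card: "card S2 \<le> card V - independence_number V E" .
  have "es_Delta V E \<le> card S2"
    unfolding es_Delta_def using mit[OF S2E cov2] by (intro Least_le) blast
  then have part2: "es_Delta V E \<le> card V - independence_number V E" using S2card by linarith
  have part3: "\<exists>(V' :: nat set) E'. simple_graph V' E' \<and> E' \<noteq> {} \<and>
            es_Delta V' E' = card V' - independence_number V' E'"
    using example .
  show ?thesis using mS part1 part2 part3 by blast
qed

end
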